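(* Let $\alpha_1,\alpha_2$ be positive integers with $\alpha_2\ge2$ and $n=\alpha_1+\alpha_2$. The Laplacian spectrum of $C(\alpha_1,\alpha_2)$ is $\{n^{(\alpha_1)},\ \alpha_1^{(\alpha_2-1)},\ 0^{(1)}\}$ (superscripts are multiplicities), so it has exactly three distinct Laplacian eigenvalues. Moreover, a $\mathcal{C}$-graph $C(\alpha_1,\dots,\alpha_k)$ ($k$ even) has exactly three distinct Laplacian eigenvalues if and only if $k=2$ and $\alpha_2\ge2$.
   Context: $C(\alpha_1,\dots,\alpha_k)$ is defined recursively by $C(\alpha_1)=\overline{K_{\alpha_1}}$ (edgeless graph) and $C(\alpha_1,\dots,\alpha_i)=\overline{C(\alpha_1,\dots,\alpha_{i-1})\cup K_{\alpha_i}}$ for $i=2,\dots,k$ (disjoint union, then complement); with $k$ even it is called a $\mathcal{C}$-graph. In particular $C(\alpha_1,\alpha_2)$ is the complete split graph $K_{\alpha_1}\vee\overline{K_{\alpha_2}}$. Laplacian eigenvalues are those of $L=D-A$. *)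

theory Defs
  imports "Jordan_Normal_Form.Char_Poly"
begin

text \<open>The list is given in REVERSED order
  (last parameter first).  Vertices are the naturals below the sum of the
  parameters; the vertices of C(a1,...,a(i-1)) are the first ones and the
  new clique K_ai occupies the next ai vertices.\<close>
fun cg_rev :: "nat list \<Rightarrow> nat \<Rightarrow> nat \<Rightarrow> bool" where
  "cg_rev [] = (\<lambda>u v. False)"
| "cg_rev [a] = (\<lambda>u v. False)"
| "cg_rev (a # b # rest) =
     (\<lambda>u v. let N = sum_list (b # rest) in
        u \<noteq> v \<and> \<not> ((u < N \<and> v < N \<and> cg_rev (b # rest) u v) \<or>
                     (N \<le> u \<and> N \<le> v)))"

definition cgraph_adj :: "nat list \<Rightarrow> nat \<Rightarrow> nat \<Rightarrow> bool" where
  "cgraph_adj as = cg_rev (rev as)"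

definition cgraph_order :: "nat list \<Rightarrow> nat" where
  "cgraph_order as = sum_list as"

definition cgraph_laplacian :: "nat list \<Rightarrow> real mat" where
  "cgraph_laplacian as = (let n = cgraph_order as in
     mat n n (\<lambda>(i,j). if i = j then real (card {w. w < n \<and> cgraph_adj as i w})
                      else if cgraph_adj as i j then -1 else 0))"

end

theory Submission
  imports Defs
begin

lemma cg_rev_irrefl: "\<not> cg_rev xs u u"
  by (cases xs rule: cg_rev.cases) (auto simp: Let_def)
lemma adj_irrefl: "\<not> cgraph_adj as u u"
  unfolding cgraph_adj_def by (rule cg_rev_irrefl)
lemma lap_carrier: "cgraph_laplacian as \<in> carrier_mat (sum_list as) (sum_list as)"
  unfolding cgraph_laplacian_def cgraph_order_def Let_def by simp
lemma lap_entry: "i < sum_list as \<Longrightarrow> j < sum_list as \<Longrightarrow> cgraph_laplacian as $$ (i,j) = (if i = j then real (card {w. w < sum_list as \<and> cgraph_adj as i w}) else if cgraph_adj as i j then -1 else 0)"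
  unfolding cgraph_laplacian_def cgraph_order_def Let_def by simp
lemma sum_if_const: "finite A \<Longrightarrow> (\<Sum>x\<in>A. if P x then c else 0) = real (card {x\<in>A. P x}) * (c::real)"
  by (simp add: sum.inter_filter[symmetric])
lemma sum_block: assumes "a \<le> b" "b \<le> n" shows "(\<Sum>j<n. if a \<le> j \<and> j < b then c else 0) = real (b-a) * (c::real)"
proof -
  have "{x\<in>{..<n}. a \<le> x \<and> x < b} = {a..<b}" using assms by auto
  thus ?thesis by (simp add: sum_if_const)
qed
lemma sum_block2: assumes "a \<le> n" shows "(\<Sum>j<n. if a \<le> j then c else 0) = real (n-a) * (c::real)"
proof -
  have "{x\<in>{..<n}. a \<le> x} = {a..<n}" using assms by auto
  thus ?thesis by (simp add: sum_if_const)
qed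
lemma sum_block3: assumes "b \<le> n" shows "(\<Sum>j<n. if j < b then c else 0) = real b * (c::real)"
  using sum_block[of 0 b n c] assms by simp

lemma lap_row_sum:
  assumes i: "i < sum_list as"
  shows "(\<Sum>j<sum_list as. cgraph_laplacian as $$ (i,j) * f j) = (\<Sum>j<sum_list as. if cgraph_adj as i j then f i - f j else 0)"
proof -
  let ?n = "sum_list as" let ?A = "cgraph_adj as i"
  let ?d = "real (card {w. w < ?n \<and> ?A w})"
  have "(\<Sum>j<?n. cgraph_laplacian as $$ (i,j) * f j) = (\<Sum>j<?n. (if j = i then ?d * f i else 0) - (if ?A j then f j else 0))"
    by (rule sum.cong) (auto simp: lap_entry i adj_irrefl)
  also have "\<dots> = ?d * f i - (\<Sum>j<?n. if ?A j then f j else 0)"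
    using i by (simp add: sum_subtractf)
  also have "?d = (\<Sum>j<?n. if ?A j then 1 else 0)"
  proof -
    have "{x\<in>{..<?n}. ?A x} = {w. w < ?n \<and> ?A w}" by auto
    thus ?thesis by (simp add: sum_if_const)
  qed
  also have "(\<Sum>j<?n. if ?A j then 1 else 0) * f i - (\<Sum>j<?n. if ?A j then f j else 0) = (\<Sum>j<?n. if ?A j then f i - f j else 0)"
    by (simp add: sum_distrib_right sum_subtractf[symmetric] if_distrib cong: if_cong)
  finally show ?thesis .
qed

lemma adj2: "cgraph_adj [a1, a2] u v = (u \<noteq> v \<and> \<not> (a1 \<le> u \<and> a1 \<le> v))"
  unfolding cgraph_adj_def by (simp add: Let_def)

lemma deg2: assumes "i < a1 + a2"
  shows "card {w. w < a1 + a2 \<and> cgraph_adj [a1,a2] i w} = (if i < a1 then a1 + a2 - 1 else a1)"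
proof (cases "i < a1")
  case True
  hence "{w. w < a1 + a2 \<and> cgraph_adj [a1,a2] i w} = {..<a1+a2} - {i}" by (auto simp: adj2)
  thus ?thesis using True assms by simp
next
  case False
  hence "{w. w < a1 + a2 \<and> cgraph_adj [a1,a2] i w} = {..<a1}" using assms by (auto simp: adj2)
  thus ?thesis using False by simp
qed

lemma sum_delta_mult: "(\<Sum>j<(n::nat). f j * (if j = m then c else 0)) = (if m < n then f m * (c::real) else 0)"
  by (induct n) (auto simp: less_Suc_eq)

lemma part1_LP:
  fixes a1 a2 :: nat assumes a1: "a1 > 0" and a2: "a2 > 0"
  assumes n_def: "n = a1 + a2"
  assumes P_def: "P = mat n n (\<lambda>(i,j). if j = 0 then 1 else if j = a1 then (if a1 \<le> i then 1 else 0) else if i = j then 1 else (0::real))"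
  assumes d_def: "d = (\<lambda>k. if k = 0 then 0 else if k \<le> a1 then real n else real a1)"
  assumes T_def: "T = mat n n (\<lambda>(j,k). (if j = k then d k else 0) + (if j = 0 then (if k \<noteq> 0 then (if k = a1 then - real a2 else -1) else 0) else 0)
     + (if j = a1 then (if a1 < k then 1 else 0) else 0))"
  shows "cgraph_laplacian [a1,a2] * P = P * T"
proof -
  let ?L = "cgraph_laplacian [a1,a2]"
  have sl: "sum_list [a1,a2] = n" by (simp add: n_def)
  have Lc: "?L \<in> carrier_mat n n" using lap_carrier[of "[a1,a2]"] by (simp add: n_def)
  have Pc: "P \<in> carrier_mat n n" and Tc: "T \<in> carrier_mat n n" by (auto simp: P_def T_def)
  show ?thesis
  proof (rule eq_matI)
    fix i k assume i: "i < dim_row (P*T)" and k: "k < dim_col (P*T)"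
    hence i: "i < n" and k: "k < n" using Pc Tc by auto
    have a1n: "a1 < n" using a2 by (simp add: n_def)
    have LPe: "(?L * P) $$ (i,k) = (\<Sum>j<n. ?L $$ (i,j) * P $$ (j,k))"
      using Lc Pc i k by (simp add: scalar_prod_def lessThan_atLeast0)
    have PTe: "(P * T) $$ (i,k) = (\<Sum>j<n. P $$ (i,j) * T $$ (j,k))"
      using Tc Pc i k by (simp add: scalar_prod_def lessThan_atLeast0)
    also have "\<dots> = (\<Sum>j<n. P $$ (i,j) * (if j = k then d k else 0)) + (\<Sum>j<n. P $$ (i,j) * (if j = 0 then (if k \<noteq> 0 then (if k = a1 then - real a2 else -1) else 0) else 0))
      + (\<Sum>j<n. P $$ (i,j) * (if j = a1 then (if a1 < k then 1 else 0) else 0))"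
      by (simp add: T_def k distrib_left sum.distrib)
    also have "\<dots> = P $$ (i,k) * d k + P $$ (i,0) * (if k \<noteq> 0 then (if k = a1 then - real a2 else -1) else 0) + P $$ (i,a1) * (if a1 < k then 1 else 0)"
      using k a1n by (simp only: sum_delta_mult) simp
    finally have PT: "(P * T) $$ (i,k) = P $$ (i,k) * d k + P $$ (i,0) * (if k \<noteq> 0 then (if k = a1 then - real a2 else -1) else 0) + P $$ (i,a1) * (if a1 < k then 1 else 0)" .
    consider "k = 0" | "k = a1" | "k \<noteq> 0" "k \<noteq> a1" by blast
    then show "(?L * P) $$ (i,k) = (P * T) $$ (i,k)"
    proof cases
      case 1
      have "(?L * P) $$ (i,k) = (\<Sum>j<n. if cgraph_adj [a1,a2] i j then P $$ (i,k) - P $$ (j,k) else 0)"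
        using LPe lap_row_sum[of i "[a1,a2]" "\<lambda>j. P $$ (j,k)"] i by (simp add: n_def)
      also have "\<dots> = 0" using 1 i by (intro sum.neutral) (auto simp: P_def)
      finally show ?thesis using PT 1 by (simp add: d_def)
    next
      case 2
      have "(?L * P) $$ (i,k) = (\<Sum>j<n. if cgraph_adj [a1,a2] i j then P $$ (i,k) - P $$ (j,k) else 0)"
        using LPe lap_row_sum[of i "[a1,a2]" "\<lambda>j. P $$ (j,k)"] i by (simp add: n_def)
      also have "\<dots> = (\<Sum>j<n. if (if i < a1 then a1 else 0) \<le> j \<and> j < (if i < a1 then n else a1) then (if i < a1 then -1 else 1) else 0)"
        using 2 i a1 a1n by (intro sum.cong) (auto simp: P_def adj2)
      also have "\<dots> = (if i < a1 then - real a2 else real a1)"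
        using a1n by (subst sum_block) (auto simp: n_def)
      finally show ?thesis using PT 2 i a1 a1n by (simp add: d_def P_def n_def)
    next
      case 3
      have "(?L * P) $$ (i,k) = (\<Sum>j<n. ?L $$ (i,j) * (if j = k then 1 else 0))"
        unfolding LPe using 3 k by (intro sum.cong) (auto simp: P_def)
      also have "\<dots> = ?L $$ (i,k)" using k by (simp only: sum_delta_mult) simp
      also have "\<dots> = (if i = k then real (if i < a1 then a1 + a2 - 1 else a1) else if cgraph_adj [a1,a2] i k then -1 else 0)"
        using i k by (simp add: lap_entry deg2 n_def)
      finally show ?thesis using PT 3 i k a1 a1n by (auto simp: d_def P_def n_def adj2)
    qed
  qed (use Lc in \<open>auto simp: P_def T_def\<close>)
qed

lemma prod_list_ones: "prod_list (map (\<lambda>_. (1::real)) xs) = 1"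
  by (induct xs) auto

lemma part1:
  fixes a1 a2 :: nat assumes a1: "a1 > 0" and a2: "a2 > 0"
  shows "char_poly (cgraph_laplacian [a1, a2]) = [:- real (a1 + a2), 1:] ^ a1 * [:- real a1, 1:] ^ (a2 - 1) * [:0, 1:]"
proof -
  define n where "n = a1 + a2"
  define P where "P = mat n n (\<lambda>(i,j). if j = 0 then 1 else if j = a1 then (if a1 \<le> i then 1 else 0) else if i = j then 1 else (0::real))"
  define d where "d = (\<lambda>k. if k = 0 then 0 else if k \<le> a1 then real n else real a1)"
  define T where "T = mat n n (\<lambda>(j,k). (if j = k then d k else 0) + (if j = 0 then (if k \<noteq> 0 then (if k = a1 then - real a2 else -1) else 0) else 0)
     + (if j = a1 then (if a1 < k then 1 else 0) else 0))"
  let ?L = "cgraph_laplacian [a1,a2]"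
  have LP: "?L * P = P * T" by (rule part1_LP[OF a1 a2 n_def P_def d_def T_def])
  have Lc: "?L \<in> carrier_mat n n" using lap_carrier[of "[a1,a2]"] by (simp add: n_def)
  have Pc: "P \<in> carrier_mat n n" and Tc: "T \<in> carrier_mat n n" by (auto simp: P_def T_def)
  have a1n: "a1 < n" using a2 by (simp add: n_def)
  have "det P = prod_list (diag_mat P)"
    by (rule det_lower_triangular[OF _ Pc]) (auto simp: P_def)
  also have "diag_mat P = map (\<lambda>_. 1) [0..<n]"
    unfolding diag_mat_def using Pc a1n by (intro map_cong) (auto simp: P_def)
  finally have dP: "det P = 1" by (simp add: prod_list_ones)
  from det_non_zero_imp_unit[OF Pc, of "()"] dP
  have "P \<in> Units (ring_mat TYPE(real) n ())" by simp
  then obtain Q where Qc: "Q \<in> carrier_mat n n" and QP: "Q * P = 1\<^sub>m n" and PQ: "P * Q = 1\<^sub>m n"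
    by (auto simp: Units_def ring_mat_def)
  have "?L = ?L * (P * Q)" using Lc by (simp add: PQ)
  also have "\<dots> = (?L * P) * Q" using Lc Pc Qc by (simp add: assoc_mult_mat)
  also have "\<dots> = P * T * Q" by (simp add: LP)
  finally have "similar_mat ?L T"
    by (intro similar_matI[of _ _ P Q n]) (use Lc Pc Qc Tc PQ QP in auto)
  hence "char_poly ?L = char_poly T" by (rule char_poly_similar)
  also have "\<dots> = (\<Prod>a\<leftarrow>diag_mat T. [:- a, 1:])"
    by (rule char_poly_upper_triangular[OF Tc]) (auto simp: upper_triangular_def T_def)
  also have "\<dots> = (\<Prod>i\<in>{0..<n}. [:- d i, 1:])"
    by (simp add: diag_mat_def T_def prod.distinct_set_conv_list[symmetric] comp_def Tc) (rule prod.cong; auto)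
  also have "\<dots> = [:- d 0, 1:] * ((\<Prod>i\<in>{1..<Suc a1}. [:- d i, 1:]) * (\<Prod>i\<in>{Suc a1..<n}. [:- d i, 1:]))"
  proof -
    have "{0..<n} = insert 0 {Suc 0..<n}" using a1n by auto
    hence "(\<Prod>i\<in>{0..<n}. [:- d i, 1:]) = [:- d 0, 1:] * (\<Prod>i\<in>{Suc 0..<n}. [:- d i, 1:])" by simp
    also have "(\<Prod>i\<in>{Suc 0..<n}. [:- d i, 1:]) = (\<Prod>i\<in>{1..<Suc a1}. [:- d i, 1:]) * (\<Prod>i\<in>{Suc a1..<n}. [:- d i, 1:])"
      using a1n by (subst prod.atLeastLessThan_concat) auto
    finally show ?thesis .
  qed
  also have "\<dots> = [:0, 1:] * ([:- real (a1 + a2), 1:] ^ a1 * [:- real a1, 1:] ^ (a2 - 1))"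
  proof -
    have "(\<Prod>i\<in>{1..<Suc a1}. [:- d i, 1:]) = (\<Prod>i\<in>{1..<Suc a1}. [:- real n, 1:])"
      by (rule prod.cong) (auto simp: d_def)
    hence 1: "(\<Prod>i\<in>{1..<Suc a1}. [:- d i, 1:]) = [:- real (a1 + a2), 1:] ^ a1" by (simp add: n_def)
    have "(\<Prod>i\<in>{Suc a1..<n}. [:- d i, 1:]) = (\<Prod>i\<in>{Suc a1..<n}. [:- real a1, 1:])"
      by (rule prod.cong) (auto simp: d_def)
    hence 2: "(\<Prod>i\<in>{Suc a1..<n}. [:- d i, 1:]) = [:- real a1, 1:] ^ (a2 - 1)" by (simp add: n_def)
    show ?thesis unfolding 1 2 by (simp add: d_def)
  qed
  finally show ?thesis by (metis mult.commute)
qed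

lemma adj_long:
  assumes "ys \<noteq> []"
  shows "cgraph_adj (ys @ [p,q,r]) u v = (u \<noteq> v \<and> \<not>((u < sum_list ys + p + q \<and> v < sum_list ys + p + q \<and>
      (u \<noteq> v \<and> \<not>((u < sum_list ys + p \<and> v < sum_list ys + p \<and>
          (u \<noteq> v \<and> \<not>((u < sum_list ys \<and> v < sum_list ys \<and> cg_rev (rev ys) u v) \<or> (sum_list ys \<le> u \<and> sum_list ys \<le> v))))
        \<or> (sum_list ys + p \<le> u \<and> sum_list ys + p \<le> v))))
     \<or> (sum_list ys + p + q \<le> u \<and> sum_list ys + p + q \<le> v)))"
proof -
  obtain y zs where yz: "rev ys = y # zs" using assms by (cases "rev ys") auto
  have s: "sum_list ys = y + sum_list zs" using arg_cong[OF yz, of sum_list] by simp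
  show ?thesis unfolding cgraph_adj_def using yz by (simp add: Let_def s add.assoc add.left_commute add.commute)
qed

lemma eig_from_fun:
  assumes A: "A \<in> carrier_mat n n" and k: "k < n" and fk: "f k \<noteq> 0"
    and ev: "\<And>i. i < n \<Longrightarrow> (\<Sum>j<n. A $$ (i,j) * f j) = lam * f i"
  shows "eigenvalue A (lam::real)"
  unfolding eigenvalue_def eigenvector_def
proof (intro exI[of _ "vec n f"] conjI)
  show "vec n f \<in> carrier_vec (dim_row A)" using A by simp
  show "vec n f \<noteq> 0\<^sub>v (dim_row A)"
  proof
    assume "vec n f = 0\<^sub>v (dim_row A)"
    hence "vec n f $ k = 0\<^sub>v (dim_row A) $ k" by simp
    thus False using A k fk by simp
  qed
  show "A *\<^sub>v vec n f = lam \<cdot>\<^sub>v vec n f"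
    by (rule eq_vecI) (use A ev in \<open>auto simp: mult_mat_vec_def scalar_prod_def lessThan_atLeast0\<close>)
qed

lemma block_eig:
  fixes e d c b :: real
  assumes ys: "ys \<noteq> []" and i: "i < sum_list ys + p + q + r"
  defines "N3 \<equiv> sum_list ys"
  shows "(\<Sum>j<sum_list (ys @ [p,q,r]). cgraph_laplacian (ys @ [p,q,r]) $$ (i,j) *
      (if j < N3 then e else if j < N3 + p then d else if j < N3 + p + q then c else b)) =
     (if i < N3 then real p * (e - d) + real r * (e - b)
      else if i < N3 + p then real N3 * (d - e) + real r * (d - b)
      else if i < N3 + p + q then real r * (c - b)
      else real N3 * (b - e) + real p * (b - d) + real q * (b - c))"
proof -
  let ?as = "ys @ [p,q,r]"
  define n where "n = N3 + p + q + r"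
  define f where "f = (\<lambda>j. if j < N3 then e else if j < N3 + p then d else if j < N3 + p + q then c else b)"
  have sl: "sum_list ?as = n" by (simp add: n_def N3_def)
  have i': "i < n" using i by (simp add: n_def N3_def)
  have adj: "cgraph_adj ?as u v = (u \<noteq> v \<and> \<not>((u < N3 + p + q \<and> v < N3 + p + q \<and>
      (u \<noteq> v \<and> \<not>((u < N3 + p \<and> v < N3 + p \<and>
          (u \<noteq> v \<and> \<not>((u < N3 \<and> v < N3 \<and> cg_rev (rev ys) u v) \<or> (N3 \<le> u \<and> N3 \<le> v))))
        \<or> (N3 + p \<le> u \<and> N3 + p \<le> v))))
     \<or> (N3 + p + q \<le> u \<and> N3 + p + q \<le> v)))" for u v
    unfolding N3_def by (rule adj_long[OF ys])
  have "(\<Sum>j<sum_list ?as. cgraph_laplacian ?as $$ (i,j) * f j) = (\<Sum>j<n. if cgraph_adj ?as i j then f i - f j else 0)"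
    using lap_row_sum[of i ?as f] i' unfolding sl by simp
  also have "\<dots> = (if i < N3 then real p * (e - d) + real r * (e - b)
      else if i < N3 + p then real N3 * (d - e) + real r * (d - b)
      else if i < N3 + p + q then real r * (c - b)
      else real N3 * (b - e) + real p * (b - d) + real q * (b - c))"
  proof -
    consider "i < N3" | "N3 \<le> i" "i < N3 + p" | "N3 + p \<le> i" "i < N3 + p + q" | "N3 + p + q \<le> i" by linarith
    then show ?thesis
    proof cases
      case 1
      have "(\<Sum>j<n. if cgraph_adj ?as i j then f i - f j else 0) =
         (\<Sum>j<n. (if N3 \<le> j \<and> j < N3 + p then e - d else 0) + (if N3 + p + q \<le> j \<and> j < n then e - b else 0))"
        using 1 by (intro sum.cong) (auto simp: adj f_def n_def)
      also have "\<dots> = real p * (e - d) + real r * (e - b)"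
        by (simp add: sum.distrib sum_block sum_block2 sum_block3 n_def)
      finally show ?thesis using 1 by simp
    next
      case 2
      have "(\<Sum>j<n. if cgraph_adj ?as i j then f i - f j else 0) =
         (\<Sum>j<n. (if 0 \<le> j \<and> j < N3 then d - e else 0) + (if N3 + p + q \<le> j \<and> j < n then d - b else 0))"
        using 2 by (intro sum.cong) (auto simp: adj f_def n_def)
      also have "\<dots> = real N3 * (d - e) + real r * (d - b)"
        by (simp add: sum.distrib sum_block sum_block2 sum_block3 n_def)
      finally show ?thesis using 2 by simp
    next
      case 3
      have "(\<Sum>j<n. if cgraph_adj ?as i j then f i - f j else 0) =
         (\<Sum>j<n. (if N3 + p + q \<le> j \<and> j < n then c - b else 0))"
        using 3 by (intro sum.cong) (auto simp: adj f_def n_def)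
      also have "\<dots> = real r * (c - b)"
        by (simp add: sum_block sum_block2 sum_block3 n_def)
      finally show ?thesis using 3 by simp
    next
      case 4
      have "(\<Sum>j<n. if cgraph_adj ?as i j then f i - f j else 0) =
         (\<Sum>j<n. (if 0 \<le> j \<and> j < N3 then b - e else 0) + (if N3 \<le> j \<and> j < N3 + p then b - d else 0)
            + (if N3 + p \<le> j \<and> j < N3 + p + q then b - c else 0))"
        using 4 i' by (intro sum.cong) (auto simp: adj f_def n_def)
      also have "\<dots> = real N3 * (b - e) + real p * (b - d) + real q * (b - c)"
        by (simp add: sum.distrib sum_block sum_block2 sum_block3 n_def)
      finally show ?thesis using 4 by simp
    qed
  qed
  finally show ?thesis unfolding f_def .
qed

lemma eig_finite: "finite {x. eigenvalue (cgraph_laplacian as) x}"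
proof -
  let ?L = "cgraph_laplacian as"
  have Lc: "?L \<in> carrier_mat (sum_list as) (sum_list as)" by (rule lap_carrier)
  have "coeff (char_poly ?L) (sum_list as) = 1" using degree_monic_char_poly[OF Lc] by simp
  hence "char_poly ?L \<noteq> 0" by auto
  hence "finite {x. poly (char_poly ?L) x = 0}" by (rule poly_roots_finite)
  thus ?thesis using eigenvalue_root_char_poly[OF Lc] by simp
qed

lemma block_eigenvalue:
  fixes e d c b lam :: real
  assumes ys: "ys \<noteq> []" and N3: "sum_list ys > 0" and e: "e \<noteq> 0"
    and h1: "real p * (e - d) + real r * (e - b) = lam * e"
    and h2: "real (sum_list ys) * (d - e) + real r * (d - b) = lam * d"
    and h3: "real r * (c - b) = lam * c"
    and h4: "real (sum_list ys) * (b - e) + real p * (b - d) + real q * (b - c) = lam * b"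
  shows "eigenvalue (cgraph_laplacian (ys @ [p,q,r])) lam"
proof (rule eig_from_fun[OF lap_carrier[of "ys @ [p,q,r]"], where k = 0 and f = "\<lambda>j. if j < sum_list ys then e else if j < sum_list ys + p then d else if j < sum_list ys + p + q then c else b"])
  show "0 < sum_list (ys @ [p,q,r])" using N3 by simp
  show "(if 0 < sum_list ys then e else if 0 < sum_list ys + p then d else if 0 < sum_list ys + p + q then c else b) \<noteq> 0"
    using N3 e by simp
  fix i assume i: "i < sum_list (ys @ [p,q,r])"
  hence i': "i < sum_list ys + p + q + r" by simp
  show "(\<Sum>j<sum_list (ys @ [p,q,r]). cgraph_laplacian (ys @ [p,q,r]) $$ (i,j) *
      (if j < sum_list ys then e else if j < sum_list ys + p then d else if j < sum_list ys + p + q then c else b)) =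
    lam * (if i < sum_list ys then e else if i < sum_list ys + p then d else if i < sum_list ys + p + q then c else b)"
    unfolding block_eig[OF ys i'] using h1 h2 h3 h4 by simp
qed

lemma long_card:
  assumes ys: "ys \<noteq> []" and pos: "\<forall>a\<in>set ys. a > 0" and p: "p > 0" and q: "q > 0" and r: "r > 0"
  shows "card {x. eigenvalue (cgraph_laplacian (ys @ [p,q,r])) x} \<ge> 4"
proof -
  let ?L = "cgraph_laplacian (ys @ [p,q,r])"
  define N3 where "N3 = sum_list ys"
  have N3: "N3 > 0" using ys pos unfolding N3_def
    by (cases ys) auto
  have N3': "sum_list ys > 0" using N3 by (simp add: N3_def)
  have rN: "real N3 = real (sum_list ys)" by (simp add: N3_def)
  have "eigenvalue ?L 0"
    by (rule block_eigenvalue[OF ys N3', where e = 1 and d = 1 and c = 1 and b = 1]) auto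
  moreover have "eigenvalue ?L (real r)"
    by (rule block_eigenvalue[OF ys N3', where e = "real q" and d = "real q" and c = "- real (sum_list ys + p)" and b = 0]) (use q in \<open>auto simp: algebra_simps\<close>)
  moreover have "eigenvalue ?L (real r + real (sum_list ys + p))"
    by (rule block_eigenvalue[OF ys N3', where e = "real p" and d = "- real (sum_list ys)" and c = 0 and b = 0]) (use p in \<open>auto simp: algebra_simps\<close>)
  moreover have "eigenvalue ?L (real (sum_list ys + p + q + r))"
    by (rule block_eigenvalue[OF ys N3', where e = "real r" and d = "real r" and c = "real r" and b = "- real (sum_list ys + p + q)"]) (use r in \<open>auto simp: algebra_simps\<close>)
  ultimately have sub: "{0, real r, real r + real (sum_list ys + p), real (sum_list ys + p + q + r)} \<subseteq> {x. eigenvalue ?L x}"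
    by auto
  have "card {0, real r, real r + real (sum_list ys + p), real (sum_list ys + p + q + r)} = 4"
    using N3' p q r by simp
  thus ?thesis using card_mono[OF eig_finite sub] by simp
qed

lemma eig_set2:
  assumes a1: "a1 > 0" and a2: "a2 > 0"
  shows "{x. eigenvalue (cgraph_laplacian [a1,a2]) x} = (if a2 \<ge> 2 then {real (a1+a2), real a1, 0} else {real (a1+a2), 0})"
proof -
  let ?L = "cgraph_laplacian [a1,a2]"
  have Lc: "?L \<in> carrier_mat (sum_list [a1,a2]) (sum_list [a1,a2])" by (rule lap_carrier)
  have "{x. eigenvalue ?L x} = {x. poly (char_poly ?L) x = 0}" using eigenvalue_root_char_poly[OF Lc] by simp
  also have "\<dots> = (if a2 \<ge> 2 then {real (a1+a2), real a1, 0} else {real (a1+a2), 0})"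
  proof -
    have "(poly (char_poly ?L) x = 0) \<longleftrightarrow> (x = real (a1+a2) \<or> (a2 \<ge> 2 \<and> x = real a1) \<or> x = 0)" for x
      unfolding part1[OF a1 a2] poly_mult poly_power using a1 a2 by (auto simp del: of_nat_add)
    thus ?thesis by auto
  qed
  finally show ?thesis .
qed

lemma card2:
  assumes a1: "a1 > 0" and a2: "a2 > 0"
  shows "card {x. eigenvalue (cgraph_laplacian [a1,a2]) x} = (if a2 \<ge> 2 then 3 else 2)"
  unfolding eig_set2[OF a1 a2] using a1 a2 by auto

lemma len3: "length xs = 3 \<Longrightarrow> \<exists>p q r. xs = [p,q,r]"
  by (auto simp: length_Suc_conv numeral_3_eq_3)

theorem mainTheorem9:
  shows "(\<forall>a1 a2 :: nat. a1 > 0 \<longrightarrow> a2 \<ge> 2 \<longrightarrow>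
            char_poly (cgraph_laplacian [a1, a2]) =
              [:- real (a1 + a2), 1:] ^ a1 * [:- real a1, 1:] ^ (a2 - 1) * [:0, 1:]
          \<and> card {x. eigenvalue (cgraph_laplacian [a1, a2]) x} = 3)
       \<and> (\<forall>as :: nat list. even (length as) \<longrightarrow> length as \<ge> 2 \<longrightarrow> (\<forall>a\<in>set as. a > 0) \<longrightarrow>
            (card {x. eigenvalue (cgraph_laplacian as) x} = 3 \<longleftrightarrow>
               (length as = 2 \<and> as ! 1 \<ge> 2)))"
proof (intro conjI allI impI)
  fix a1 a2 :: nat assume a1: "a1 > 0" and a2: "a2 \<ge> 2"
  hence a2': "a2 > 0" by simp
  show "char_poly (cgraph_laplacian [a1, a2]) =
              [:- real (a1 + a2), 1:] ^ a1 * [:- real a1, 1:] ^ (a2 - 1) * [:0, 1:]"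
    by (rule part1[OF a1 a2'])
  show "card {x. eigenvalue (cgraph_laplacian [a1, a2]) x} = 3"
    using card2[OF a1 a2'] a2 by simp
next
  fix as :: "nat list"
  assume ev: "even (length as)" and l2: "length as \<ge> 2" and pos: "\<forall>a\<in>set as. a > 0"
  show "card {x. eigenvalue (cgraph_laplacian as) x} = 3 \<longleftrightarrow> (length as = 2 \<and> as ! 1 \<ge> 2)"
  proof (cases "length as = 2")
    case True
    then obtain a1 a2 where as: "as = [a1,a2]" by (auto simp: length_Suc_conv numeral_2_eq_2)
    have a1: "a1 > 0" and a2: "a2 > 0" using pos as by auto
    show ?thesis using card2[OF a1 a2] as by simp
  next
    case False
    with ev l2 have l4: "length as \<ge> 4" by presburger
    define ys where "ys = take (length as - 3) as"
    obtain p q r where pqr: "drop (length as - 3) as = [p,q,r]" using len3[of "drop (length as - 3) as"] l4 by auto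
    have as: "as = ys @ [p,q,r]" unfolding ys_def pqr[symmetric] by simp
    have ys: "ys \<noteq> []" using l4 unfolding ys_def by (cases as) auto
    have posy: "\<forall>a\<in>set ys. a > 0" and p: "p > 0" and q: "q > 0" and r: "r > 0" using pos as by auto
    have "card {x. eigenvalue (cgraph_laplacian as) x} \<ge> 4" unfolding as by (rule long_card[OF ys posy p q r])
    thus ?thesis using False by simp
  qed
qed
end
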